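(* Assume (H1), (H2.3) and (H2.4). Then $(I_{X^{+}}-\mathcal{F}_{s}V^{+})|_{\widehat{X}^{+}}$, regarded as an operator from $\widehat{X}^{+}$ to $\widehat{X}^{+}$ (with the norm of $\widehat{X}^{+}$), is invertible with bounded inverse.
   Context: Let $d\ge 1$ be an integer and $\tau>0$, $h>0$ real. $X$, $X^{+}$, $X^{\pm}$ are real normed spaces of functions $[-\tau,0]\to\mathbb{R}^{d}$, $[0,h]\to\mathbb{R}^{d}$, $[-\tau,h]\to\mathbb{R}^{d}$, respectively. $V\colon X\times X^{+}\to X^{\pm}$ and $\mathcal{F}_{s}\colon X^{\pm}\to X^{+}$ are linear; $V^{+}z:=V(0_{X},z)$. Hypotheses: (H1) $I_{X^{+}}-\mathcal{F}_{s}V^{+}\colon X^{+}\to X^{+}$ is invertible with bounded inverse and for each $\phi\in X$ the equation $z=\mathcal{F}_{s}V(\phi,z)$ has a unique solution in $X^{+}$. There is a linear subspace $\widehat{X}^{+}\subseteq X^{+}$ with a norm $\|\cdot\|_{\widehat{X}^{+}}$ making it complete such that (H2.3) there is $\hat{c}_{1}>0$ with $\|z\|_{X^{+}}\le\hat{c}_{1}\|z\|_{\widehat{X}^{+}}$ for all $z\in\widehat{X}^{+}$, and (H2.4) the range of $\mathcal{F}_{s}V^{+}\colon X^{+}\to X^{+}$ is contained in $\widehat{X}^{+}$ and $\mathcal{F}_{s}V^{+}\colon X^{+}\to\widehat{X}^{+}$ is bounded. *)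

theory Defs
  imports "HOL-Analysis.Analysis"
begin

definition norm_on :: "'a::real_vector set \<Rightarrow> ('a \<Rightarrow> real) \<Rightarrow> bool" where
  "norm_on S nh \<longleftrightarrow> subspace S \<and>
     (\<forall>x\<in>S. 0 \<le> nh x) \<and> (\<forall>x\<in>S. nh x = 0 \<longleftrightarrow> x = 0) \<and>
     (\<forall>a. \<forall>x\<in>S. nh (a *\<^sub>R x) = \<bar>a\<bar> * nh x) \<and>
     (\<forall>x\<in>S. \<forall>y\<in>S. nh (x + y) \<le> nh x + nh y)"

definition complete_wrt :: "'a::real_vector set \<Rightarrow> ('a \<Rightarrow> real) \<Rightarrow> bool" where
  "complete_wrt S nh \<longleftrightarrow>
     (\<forall>u. (\<forall>n. u n \<in> S) \<longrightarrow>
          (\<forall>e>0. \<exists>N. \<forall>m\<ge>N. \<forall>n\<ge>N. nh (u m - u n) < e) \<longrightarrow>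
          (\<exists>l\<in>S. (\<lambda>n. nh (u n - l)) \<longlonglongrightarrow> 0))"

end

theory Submission
  imports Defs
begin

theorem lemma4p6:
  fixes V :: "'x::real_normed_vector \<Rightarrow> 'p::real_normed_vector \<Rightarrow> 'q::real_normed_vector"
    and Fs :: "'q \<Rightarrow> 'p"
    and Xh :: "'p set" and nh :: "'p \<Rightarrow> real"
  assumes linV: "linear (\<lambda>(\<phi>, z). V \<phi> z)"
    and linF: "linear Fs"
    and H1_inv: "\<exists>g. bounded_linear g \<and> (\<forall>z. g (z - Fs (V 0 z)) = z)
                     \<and> (\<forall>z. g z - Fs (V 0 (g z)) = z)"
    and H1_uniq: "\<forall>\<phi>. \<exists>!z. z = Fs (V \<phi> z)"
    and Xh_norm: "norm_on Xh nh"
    and Xh_complete: "complete_wrt Xh nh"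
    and H23: "\<exists>c1>0. \<forall>z\<in>Xh. norm z \<le> c1 * nh z"
    and H24_range: "\<forall>z. Fs (V 0 z) \<in> Xh"
    and H24_bdd: "\<exists>C. \<forall>z. nh (Fs (V 0 z)) \<le> C * norm z"
  shows "bij_betw (\<lambda>z. z - Fs (V 0 z)) Xh Xh \<and>
         (\<exists>C. \<forall>z\<in>Xh. nh (inv_into Xh (\<lambda>z. z - Fs (V 0 z)) z) \<le> C * nh z)"
proof -
  let ?T = "\<lambda>z. z - Fs (V 0 z)"
  obtain g where gb: "bounded_linear g" and g1: "\<And>z. g (?T z) = z"
    and g2: "\<And>z. g z - Fs (V 0 (g z)) = z" using H1_inv by blast
  obtain c1 where c1: "c1 > 0" "\<And>z. z \<in> Xh \<Longrightarrow> norm z \<le> c1 * nh z" using H23 by blast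
  obtain C where C: "\<And>z. nh (Fs (V 0 z)) \<le> C * norm z" using H24_bdd by blast
  obtain B where B: "B > 0" "\<And>z. norm (g z) \<le> norm z * B"
    using bounded_linear.pos_bounded[OF gb] by blast
  have sub: "subspace Xh" and nhnn: "\<And>x. x \<in> Xh \<Longrightarrow> 0 \<le> nh x"
    and tri: "\<And>x y. x \<in> Xh \<Longrightarrow> y \<in> Xh \<Longrightarrow> nh (x + y) \<le> nh x + nh y"
    using Xh_norm unfolding norm_on_def by auto
  have gX: "g y \<in> Xh" if "y \<in> Xh" for y
  proof -
    have "g y = y + Fs (V 0 (g y))" using g2[of y] by (simp add: algebra_simps)
    thus ?thesis using subspace_add[OF sub that H24_range[rule_format, of "g y"]] by simp
  qed
  have TX: "?T z \<in> Xh" if "z \<in> Xh" for z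
    using subspace_diff[OF sub that H24_range[rule_format]] .
  have inj: "inj_on ?T Xh" by (rule inj_onI) (metis g1)
  have img: "?T ` Xh = Xh"
  proof
    show "?T ` Xh \<subseteq> Xh" using TX by auto
    show "Xh \<subseteq> ?T ` Xh"
    proof
      fix y assume y: "y \<in> Xh"
      have "?T (g y) = y" using g2 by simp
      thus "y \<in> ?T ` Xh" using gX[OF y] by (intro image_eqI[of _ _ "g y"]) auto
    qed
  qed
  have bij: "bij_betw ?T Xh Xh" using inj img by (simp add: bij_betw_def)
  have invg: "inv_into Xh ?T y = g y" if "y \<in> Xh" for y
  proof -
    have "?T (g y) = y" using g2 by simp
    thus ?thesis using inv_into_f_eq[OF inj gX[OF that]] by simp
  qed
  have bound: "nh (inv_into Xh ?T y) \<le> (1 + \<bar>C\<bar> * B * c1) * nh y" if y: "y \<in> Xh" for y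
  proof -
    have e: "g y = y + Fs (V 0 (g y))" using g2[of y] by (simp add: algebra_simps)
    have "nh (g y) \<le> nh y + nh (Fs (V 0 (g y)))"
      using tri[OF y H24_range[rule_format, of "g y"]] e by simp
    also have "nh (Fs (V 0 (g y))) \<le> \<bar>C\<bar> * norm (g y)"
      using C[of "g y"] proof -
      have "C * norm (g y) \<le> \<bar>C\<bar> * norm (g y)" by (rule mult_right_mono) auto
      thus ?thesis using C[of "g y"] by linarith
    qed
    also have "\<bar>C\<bar> * norm (g y) \<le> \<bar>C\<bar> * (norm y * B)"
      using B(2)[of y] by (simp add: mult_left_mono)
    also have "\<bar>C\<bar> * (norm y * B) \<le> \<bar>C\<bar> * (c1 * nh y * B)"
      using c1(2)[OF y] B(1) by (simp add: mult_left_mono mult_right_mono)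
    finally have "nh (g y) \<le> nh y + \<bar>C\<bar> * (c1 * nh y * B)" by simp
    moreover have "nh y + \<bar>C\<bar> * (c1 * nh y * B) = (1 + \<bar>C\<bar> * B * c1) * nh y"
      by (simp add: algebra_simps)
    ultimately show ?thesis using invg[OF y] by simp
  qed
  show ?thesis using bij bound by blast
qed

end
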